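(* Let $\mathcal{S}\subset\mathbb{R}^d$ be a smooth, closed one-dimensional manifold of arclength $L>0$, parameterized by arclength $s$, so that functions on $\mathcal{S}$ are identified with $L$-periodic functions on $\mathbb{R}$. Let $c>0$ and let $f$ be a continuous $L$-periodic function, and let $u$ be the unique $L$-periodic solution of $(c-\frac{\mathrm{d}^2}{\mathrm{d}s^2})u=f$ on $\mathbb{R}$. Let $\mathcal{S}_1=[a_1,b_1]$ and $\mathcal{S}_2=[a_2,b_2]$ be overlapping subdomains with $a_1<0$ and $b_2>L$. Set $\ell_1=b_1-a_1$, $\ell_2=b_2-a_2$, and define the overlaps $\delta_1=b_1-a_2>0$ and $\delta_2=b_2-(a_1+L)>0$. Assume $0<\delta_1+\delta_2<\min\{\ell_1,\ell_2\}$. Starting from arbitrary continuous initial functions $u_1^0$ on $\mathcal{S}_1$ and $u_2^0$ on $\mathcal{S}_2$, define for $n=0,1,2,\dots$ the parallel Schwarz iterates $u_1^{n+1}$ on $\mathcal{S}_1$ and $u_2^{n+1}$ on $\mathcal{S}_2$ as the solutions of $$\begin{cases}(c-\frac{\mathrm{d}^2}{\mathrm{d}s^2})u_1^{n+1}=f &\text{in } (a_1,b_1),\\ u_1^{n+1}(a_1)=u_2^n(a_1+L),\\ u_1^{n+1}(b_1)=u_2^n(b_1),\end{cases}\qquad \begin{cases}(c-\frac{\mathrm{d}^2}{\mathrm{d}s^2})u_2^{n+1}=f &\text{in } (a_2,b_2),\\ u_2^{n+1}(a_2)=u_1^n(a_2),\\ u_2^{n+1}(b_2)=u_1^n(b_2-L).\end{cases}$$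 Then the iteration converges globally: for every choice of initial functions, $\max_{s\in\mathcal{S}_j}|u_j^n(s)-u(s)|\to 0$ as $n\to\infty$ for $j=1,2$.
   Context: This iteration is the continuous (mesh size $h\to 0$) limit of the parallel Schwarz / restricted additive Schwarz solver applied to the closest point method discretization of the surface intrinsic positive Helmholtz equation $(c-\Delta_{\mathcal{S}})u=f$ on the curve $\mathcal{S}$; on a one-dimensional manifold parameterized by arclength, $\Delta_{\mathcal{S}}=\mathrm{d}^2/\mathrm{d}s^2$. Since $a_1<0$ and $b_2>L$, the subdomain intervals extend beyond $[0,L]$ and $f$ is evaluated through its $L$-periodic extension. The boundary points used in the transmission conditions satisfy $a_1+L,\,b_1\in\mathcal{S}_2$ and $a_2,\,b_2-L\in\mathcal{S}_1$ under the stated assumptions. *)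

theory Defs
  imports Complex_Main
begin

definition helmholtz_sol_on :: "real \<Rightarrow> (real \<Rightarrow> real) \<Rightarrow> real set \<Rightarrow> (real \<Rightarrow> real) \<Rightarrow> bool" where
  "helmholtz_sol_on c f I v \<longleftrightarrow>
     (\<exists>v' v''. \<forall>x\<in>I. (v has_real_derivative v' x) (at x) \<and>
                      (v' has_real_derivative v'' x) (at x) \<and>
                      c * v x - v'' x = f x)"

end

theory Submission
  imports Defs "HOL-Analysis.Analysis"
begin


lemma ode_rep:
  fixes a b c :: real and e e' e'' :: "real \<Rightarrow> real"
  assumes ab: "a < b" and c: "c > 0" and cont: "continuous_on {a..b} e"
    and d: "\<And>x. x \<in> {a<..<b} \<Longrightarrow> (e has_real_derivative e' x) (at x) \<and>
                 (e' has_real_derivative e'' x) (at x) \<and> c * e x - e'' x = 0"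
  shows "\<exists>\<alpha> \<beta>. \<forall>x\<in>{a..b}. e x = \<alpha> * exp (sqrt c * x) + \<beta> * exp (- (sqrt c * x))"
proof -
  define k where "k = sqrt c"
  have k: "k > 0" "k * k = c" using c by (auto simp: k_def)
  define p where "p x = (e' x - k * e x) * exp (k * x)" for x
  define q where "q x = (e' x + k * e x) * exp (- (k * x))" for x
  define m where "m = (a + b) / 2"
  have m: "m \<in> {a<..<b}" using ab by (auto simp: m_def)
  have pd: "(p has_real_derivative 0) (at x)" if x: "x \<in> {a<..<b}" for x
  proof -
    from d[OF x] have d1: "(e has_real_derivative e' x) (at x)" and d2: "(e' has_real_derivative e'' x) (at x)"
      and eq: "e'' x = k * k * e x" using k by auto
    have "(p has_real_derivative (e'' x - k * e' x) * exp (k * x) + (e' x - k * e x) * (exp (k * x) * k)) (at x)"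
      unfolding p_def[abs_def]
      by (rule derivative_eq_intros d1 d2 refl | simp)+
    moreover have "(e'' x - k * e' x) * exp (k * x) + (e' x - k * e x) * (exp (k * x) * k) = 0"
      using eq by (simp add: algebra_simps)
    ultimately show ?thesis by simp
  qed
  have qd: "(q has_real_derivative 0) (at x)" if x: "x \<in> {a<..<b}" for x
  proof -
    from d[OF x] have d1: "(e has_real_derivative e' x) (at x)" and d2: "(e' has_real_derivative e'' x) (at x)"
      and eq: "e'' x = k * k * e x" using k by auto
    have "(q has_real_derivative (e'' x + k * e' x) * exp (- (k * x)) + (e' x + k * e x) * (exp (- (k * x)) * - k)) (at x)"
      unfolding q_def[abs_def]
      by (rule derivative_eq_intros d1 d2 refl | simp)+
    moreover have "(e'' x + k * e' x) * exp (- (k * x)) + (e' x + k * e x) * (exp (- (k * x)) * - k) = 0"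
      using eq by (simp add: algebra_simps)
    ultimately show ?thesis by simp
  qed
  define P where "P = p m"
  define Q where "Q = q m"
  define g where "g x = Q / (2 * k) * exp (k * x) + (- P / (2 * k)) * exp (- (k * x))" for x
  have eqin: "e x = g x" if x: "x \<in> {a<..<b}" for x
  proof -
    have "p x = P" unfolding P_def using DERIV_isconst3[OF ab x m pd] by auto
    moreover have "q x = Q" unfolding Q_def using DERIV_isconst3[OF ab x m qd] by auto
    ultimately have "P = (e' x - k * e x) * exp (k * x)" "Q = (e' x + k * e x) * exp (- (k * x))"
      by (auto simp: p_def q_def)
    then have PP: "P = e' x * exp (k * x) - k * e x * exp (k * x)"
      and QQ: "Q * exp (k * x) = e' x + k * e x"
      by (auto simp: algebra_simps exp_minus field_simps)
    have "g x = (Q * exp (k * x) - P * exp (- (k * x))) / (2 * k)"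
      unfolding g_def by (simp add: diff_divide_distrib)
    also have "P * exp (- (k * x)) = e' x - k * e x"
      unfolding PP by (simp add: algebra_simps exp_minus)
    finally show ?thesis using k QQ by (simp add: field_simps)
  qed
  have "continuous_on {a..b} (\<lambda>x. e x - g x)"
    unfolding g_def by (intro continuous_intros cont)
  then have "e x - g x = 0" if "x \<in> {a..b}" for x
    using continuous_constant_on_closure[of "{a<..<b}" "\<lambda>x. e x - g x" 0 x] ab that eqin by auto
  then have "\<forall>x\<in>{a..b}. e x = Q / (2 * k) * exp (sqrt c * x) + (- P / (2 * k)) * exp (- (sqrt c * x))"
    unfolding g_def k_def by auto
  then show ?thesis by blast
qed

lemma alg_id:
  fixes A B X al be :: real
  assumes "A > 0" "B > 0" "X > 0"
  shows "(al * X + be / X) * ((B / A - A / B) / 2) =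
    (al * A + be / A) * ((B / X - X / B) / 2) + (al * B + be / B) * ((X / A - A / X) / 2)"
proof -
  have "A \<noteq> 0" "B \<noteq> 0" "X \<noteq> 0" using assms by auto
  then show ?thesis
    by (simp add: divide_simps) (simp add: algebra_simps)
qed

lemma sinh_diff_exp: "sinh (k * (y - x)) = (exp (k * y) / exp (k * x) - exp (k * x) / exp (k * y)) / 2"
  for k x y :: real
  by (simp add: sinh_def right_diff_distrib exp_diff)

lemma sinh_sum_le:
  fixes u v :: real
  assumes "u \<ge> 0" "v \<ge> 0"
  shows "sinh u + sinh v \<le> sinh (u + v)"
proof -
  have "sinh u * 1 \<le> sinh u * cosh v" using assms cosh_real_ge_1[of v] by (intro mult_left_mono) auto
  moreover have "1 * sinh v \<le> cosh u * sinh v" using assms cosh_real_ge_1[of u] by (intro mult_right_mono) auto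
  ultimately show ?thesis by (simp add: sinh_add)
qed

lemma sinh_sum_less:
  fixes u v :: real
  assumes "u > 0" "v > 0"
  shows "sinh u + sinh v < sinh (u + v)"
proof -
  have "cosh v > 1" using cosh_real_ge_1[of v] cosh_real_one_iff[of v] assms by linarith
  then have "sinh u * 1 < sinh u * cosh v" using assms by (intro mult_strict_left_mono) auto
  moreover have "1 * sinh v \<le> cosh u * sinh v" using assms cosh_real_ge_1[of u] by (intro mult_right_mono) auto
  ultimately show ?thesis by (simp add: sinh_add)
qed

lemma ode_bound:
  fixes a b c x :: real and e e' e'' :: "real \<Rightarrow> real"
  assumes ab: "a < b" and c: "c > 0" and cont: "continuous_on {a..b} e"
    and d: "\<And>x. x \<in> {a<..<b} \<Longrightarrow> (e has_real_derivative e' x) (at x) \<and>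
                 (e' has_real_derivative e'' x) (at x) \<and> c * e x - e'' x = 0"
    and x: "x \<in> {a..b}"
  shows "\<bar>e x\<bar> \<le> (sinh (sqrt c * (b - x)) + sinh (sqrt c * (x - a))) / sinh (sqrt c * (b - a))
          * max \<bar>e a\<bar> \<bar>e b\<bar>"
proof -
  define k where "k = sqrt c"
  have k: "k > 0" using c by (simp add: k_def)
  obtain al be where rep: "\<forall>x\<in>{a..b}. e x = al * exp (k * x) + be * exp (- (k * x))"
    using ode_rep[OF ab c cont d] unfolding k_def by blast
  have ea: "e a = al * exp (k * a) + be / exp (k * a)" using rep ab by (simp add: exp_minus divide_inverse)
  have eb: "e b = al * exp (k * b) + be / exp (k * b)" using rep ab by (simp add: exp_minus divide_inverse)
  have ex: "e x = al * exp (k * x) + be / exp (k * x)" using rep x by (simp add: exp_minus divide_inverse)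
  have iden: "e x * sinh (k * (b - a)) = e a * sinh (k * (b - x)) + e b * sinh (k * (x - a))"
    unfolding ea eb ex sinh_diff_exp by (rule alg_id) auto
  have s1: "sinh (k * (b - x)) \<ge> 0" "sinh (k * (x - a)) \<ge> 0" using x k by auto
  have s0: "sinh (k * (b - a)) > 0" using ab k by auto
  define M where "M = max \<bar>e a\<bar> \<bar>e b\<bar>"
  have "\<bar>e x\<bar> * sinh (k * (b - a)) = \<bar>e x * sinh (k * (b - a))\<bar>" using s0 by (simp add: abs_mult)
  also have "\<dots> \<le> \<bar>e a\<bar> * sinh (k * (b - x)) + \<bar>e b\<bar> * sinh (k * (x - a))"
    unfolding iden using s1 abs_triangle_ineq[of "e a * sinh (k * (b - x))" "e b * sinh (k * (x - a))"]
    by (simp add: abs_mult)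
  also have "\<dots> \<le> M * sinh (k * (b - x)) + M * sinh (k * (x - a))"
    using s1 unfolding M_def by (intro add_mono mult_right_mono) auto
  finally have "\<bar>e x\<bar> * sinh (k * (b - a)) \<le> (sinh (k * (b - x)) + sinh (k * (x - a))) * M"
    by (simp add: algebra_simps)
  then have "\<bar>e x\<bar> \<le> (sinh (k * (b - x)) + sinh (k * (x - a))) * M / sinh (k * (b - a))"
    using s0 by (simp add: pos_le_divide_eq)
  then show ?thesis unfolding M_def k_def by (simp add: divide_simps)
qed

lemma err_bound:
  fixes a b c x :: real and V u f :: "real \<Rightarrow> real"
  assumes ab: "a < b" and c: "c > 0" and contV: "continuous_on {a..b} V"
    and hV: "helmholtz_sol_on c f {a<..<b} V" and hu: "helmholtz_sol_on c f UNIV u"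
    and x: "x \<in> {a..b}"
  shows "\<bar>V x - u x\<bar> \<le> (sinh (sqrt c * (b - x)) + sinh (sqrt c * (x - a))) / sinh (sqrt c * (b - a))
          * max \<bar>V a - u a\<bar> \<bar>V b - u b\<bar>"
proof -
  obtain v' v'' where v: "\<forall>x\<in>{a<..<b}. (V has_real_derivative v' x) (at x) \<and>
                      (v' has_real_derivative v'' x) (at x) \<and> c * V x - v'' x = f x"
    using hV unfolding helmholtz_sol_on_def by blast
  obtain w' w'' where w: "\<forall>x\<in>UNIV. (u has_real_derivative w' x) (at x) \<and>
                      (w' has_real_derivative w'' x) (at x) \<and> c * u x - w'' x = f x"
    using hu unfolding helmholtz_sol_on_def by blast
  have "continuous_on {a..b} u"
    using w by (meson DERIV_continuous continuous_at_imp_continuous_on UNIV_I)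
  then have cont: "continuous_on {a..b} (\<lambda>x. V x - u x)" using contV by (intro continuous_intros)
  have d: "((\<lambda>x. V x - u x) has_real_derivative (\<lambda>x. v' x - w' x) y) (at y) \<and>
       ((\<lambda>x. v' x - w' x) has_real_derivative (v'' y - w'' y)) (at y) \<and>
       c * (V y - u y) - (v'' y - w'' y) = 0" if "y \<in> {a<..<b}" for y
    using v w that by (auto intro!: DERIV_diff simp: algebra_simps)
  show ?thesis
    using ode_bound[where e="\<lambda>x. V x - u x" and e'="\<lambda>x. v' x - w' x" and e''="\<lambda>y. v'' y - w'' y",
       OF ab c cont d x] by simp
qed

lemma ratio_props:
  fixes a b x k :: real
  assumes k: "k > 0" and ab: "a < b"
  shows "x \<in> {a..b} \<Longrightarrow> (sinh (k * (b - x)) + sinh (k * (x - a))) / sinh (k * (b - a)) \<le> 1"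
    and "x \<in> {a<..<b} \<Longrightarrow> (sinh (k * (b - x)) + sinh (k * (x - a))) / sinh (k * (b - a)) < 1"
    and "x \<in> {a..b} \<Longrightarrow> 0 \<le> (sinh (k * (b - x)) + sinh (k * (x - a))) / sinh (k * (b - a))"
proof -
  have s0: "sinh (k * (b - a)) > 0" using k ab by simp
  have eq: "k * (b - x) + k * (x - a) = k * (b - a)" by (simp add: algebra_simps)
  show "x \<in> {a..b} \<Longrightarrow> (sinh (k * (b - x)) + sinh (k * (x - a))) / sinh (k * (b - a)) \<le> 1"
    using sinh_sum_le[of "k * (b - x)" "k * (x - a)"] k s0 by (simp add: eq)
  show "x \<in> {a<..<b} \<Longrightarrow> (sinh (k * (b - x)) + sinh (k * (x - a))) / sinh (k * (b - a)) < 1"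
    using sinh_sum_less[of "k * (b - x)" "k * (x - a)"] k s0 by (simp add: eq)
  show "x \<in> {a..b} \<Longrightarrow> 0 \<le> (sinh (k * (b - x)) + sinh (k * (x - a))) / sinh (k * (b - a))"
    using k s0 by simp
qed



theorem theorem2:
  fixes c L a1 b1 a2 b2 :: real
    and f u :: "real \<Rightarrow> real"
    and U1 U2 :: "nat \<Rightarrow> real \<Rightarrow> real"
  assumes L_pos: "L > 0" and c_pos: "c > 0"
    and f_cont: "continuous_on UNIV f" and f_per: "\<forall>x. f (x + L) = f x"
    and u_per: "\<forall>x. u (x + L) = u x"
    and u_sol: "helmholtz_sol_on c f UNIV u"
    and a1_neg: "a1 < 0" and b2_gt: "b2 > L"
    and delta1: "b1 - a2 > 0" and delta2: "b2 - (a1 + L) > 0"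
    and overlap: "(b1 - a2) + (b2 - (a1 + L)) < min (b1 - a1) (b2 - a2)"
    and init1: "continuous_on {a1..b1} (U1 0)"
    and init2: "continuous_on {a2..b2} (U2 0)"
    and iter1: "\<forall>n. continuous_on {a1..b1} (U1 (Suc n)) \<and>
                    helmholtz_sol_on c f {a1<..<b1} (U1 (Suc n)) \<and>
                    U1 (Suc n) a1 = U2 n (a1 + L) \<and> U1 (Suc n) b1 = U2 n b1"
    and iter2: "\<forall>n. continuous_on {a2..b2} (U2 (Suc n)) \<and>
                    helmholtz_sol_on c f {a2<..<b2} (U2 (Suc n)) \<and>
                    U2 (Suc n) a2 = U1 n a2 \<and> U2 (Suc n) b2 = U1 n (b2 - L)"
  shows "(\<lambda>n. SUP s\<in>{a1..b1}. \<bar>U1 n s - u s\<bar>) \<longlonglongrightarrow> 0 \<and>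
         (\<lambda>n. SUP s\<in>{a2..b2}. \<bar>U2 n s - u s\<bar>) \<longlonglongrightarrow> 0"
  proof -
  define k where "k = sqrt c"
  have k: "k > 0" using c_pos by (simp add: k_def)
  define r where "r a b x = (sinh (k * (b - x)) + sinh (k * (x - a))) / sinh (k * (b - a))" for a b x
  have ab1: "a1 < b1" and ab2: "a2 < b2" using overlap delta1 delta2 by auto
  have L1: "b1 - a1 < L" and L2: "b2 - a2 < L" using overlap by auto
  have p1: "a2 \<in> {a1<..<b1}" "b2 - L \<in> {a1<..<b1}" using L1 L2 delta1 delta2 by auto
  have p2: "a1 + L \<in> {a2<..<b2}" "b1 \<in> {a2<..<b2}" using L1 L2 delta1 delta2 by auto
  define \<rho> where "\<rho> = max (max (r a1 b1 a2) (r a1 b1 (b2 - L))) (max (r a2 b2 (a1 + L)) (r a2 b2 b1))"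
  have rl1: "\<And>x. x \<in> {a1<..<b1} \<Longrightarrow> r a1 b1 x < 1" "\<And>x. x \<in> {a2<..<b2} \<Longrightarrow> r a2 b2 x < 1"
    unfolding r_def using ratio_props(2)[OF k ab1] ratio_props(2)[OF k ab2] by auto
  have rle1: "\<And>x. x \<in> {a1..b1} \<Longrightarrow> r a1 b1 x \<le> 1" "\<And>x. x \<in> {a2..b2} \<Longrightarrow> r a2 b2 x \<le> 1"
    unfolding r_def using ratio_props(1)[OF k ab1] ratio_props(1)[OF k ab2] by auto
  have rge0: "\<And>x. x \<in> {a1..b1} \<Longrightarrow> 0 \<le> r a1 b1 x" "\<And>x. x \<in> {a2..b2} \<Longrightarrow> 0 \<le> r a2 b2 x"
    unfolding r_def using ratio_props(3)[OF k ab1] ratio_props(3)[OF k ab2] by auto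
  have rho1: "\<rho> < 1" unfolding \<rho>_def using rl1(1)[OF p1(1)] rl1(1)[OF p1(2)] rl1(2)[OF p2(1)] rl1(2)[OF p2(2)] by auto
  have rho0: "0 \<le> \<rho>" unfolding \<rho>_def using rge0(1)[of a2] p1 by auto
  have rr: "r a1 b1 a2 \<le> \<rho>" "r a1 b1 (b2 - L) \<le> \<rho>" "r a2 b2 (a1 + L) \<le> \<rho>" "r a2 b2 b1 \<le> \<rho>"
    unfolding \<rho>_def by auto
  define E1 where "E1 n x = U1 n x - u x" for n x
  define E2 where "E2 n x = U2 n x - u x" for n x
  define M where "M n = max (max \<bar>E1 n a2\<bar> \<bar>E1 n (b2 - L)\<bar>) (max \<bar>E2 n (a1 + L)\<bar> \<bar>E2 n b1\<bar>)" for n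
  have M0: "M n \<ge> 0" for n unfolding M_def by auto
  have bnd1: "\<bar>E1 (Suc n) x\<bar> \<le> r a1 b1 x * max \<bar>E2 n (a1 + L)\<bar> \<bar>E2 n b1\<bar>" if x: "x \<in> {a1..b1}" for n x
  proof -
    have "u (a1 + L) = u a1" using u_per by auto
    then have "U1 (Suc n) a1 - u a1 = E2 n (a1 + L)" "U1 (Suc n) b1 - u b1 = E2 n b1"
      using iter1 unfolding E2_def by auto
    then show ?thesis
      using err_bound[OF ab1 c_pos _ _ u_sol x, of "U1 (Suc n)"] iter1 unfolding E1_def r_def k_def by auto
  qed
  have bnd2: "\<bar>E2 (Suc n) x\<bar> \<le> r a2 b2 x * max \<bar>E1 n a2\<bar> \<bar>E1 n (b2 - L)\<bar>" if x: "x \<in> {a2..b2}" for n x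
  proof -
    have "u (b2 - L + L) = u (b2 - L)" using u_per by blast
    then have "U2 (Suc n) b2 - u b2 = E1 n (b2 - L)" "U2 (Suc n) a2 - u a2 = E1 n a2"
      using iter2 unfolding E1_def by auto
    then show ?thesis
      using err_bound[OF ab2 c_pos _ _ u_sol x, of "U2 (Suc n)"] iter2 unfolding E2_def r_def k_def by auto
  qed
  have sup1: "\<bar>E1 (Suc n) x\<bar> \<le> M n" if "x \<in> {a1..b1}" for n x
  proof -
    have "\<bar>E1 (Suc n) x\<bar> \<le> 1 * max \<bar>E2 n (a1 + L)\<bar> \<bar>E2 n b1\<bar>"
      using bnd1[OF that, of n] rle1(1)[OF that] by (meson abs_ge_zero max.coboundedI1 mult_right_mono order_trans)
    then show ?thesis unfolding M_def by (auto simp: le_max_iff_disj)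
  qed
  have sup2: "\<bar>E2 (Suc n) x\<bar> \<le> M n" if "x \<in> {a2..b2}" for n x
  proof -
    have "\<bar>E2 (Suc n) x\<bar> \<le> 1 * max \<bar>E1 n a2\<bar> \<bar>E1 n (b2 - L)\<bar>"
      using bnd2[OF that, of n] rle1(2)[OF that] by (meson abs_ge_zero max.coboundedI1 mult_right_mono order_trans)
    then show ?thesis unfolding M_def by (auto simp: le_max_iff_disj)
  qed
  have step: "M (Suc n) \<le> \<rho> * M n" for n
  proof -
    have m1: "max \<bar>E2 n (a1 + L)\<bar> \<bar>E2 n b1\<bar> \<le> M n" "max \<bar>E1 n a2\<bar> \<bar>E1 n (b2 - L)\<bar> \<le> M n"
      unfolding M_def by auto
    have g: "\<bar>E\<bar> \<le> \<rho> * M n" if "\<bar>E\<bar> \<le> rx * mx" "0 \<le> rx" "rx \<le> \<rho>" "0 \<le> mx" "mx \<le> M n" for E rx mx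
      using that by (meson mult_mono order_trans rho0)
    have "\<bar>E1 (Suc n) a2\<bar> \<le> \<rho> * M n"
      using p1 by (intro g[OF bnd1 rge0(1) rr(1) _ m1(1)]) auto
    moreover have "\<bar>E1 (Suc n) (b2 - L)\<bar> \<le> \<rho> * M n"
      using p1 by (intro g[OF bnd1 rge0(1) rr(2) _ m1(1)]) auto
    moreover have "\<bar>E2 (Suc n) (a1 + L)\<bar> \<le> \<rho> * M n"
      using p2 by (intro g[OF bnd2 rge0(2) rr(3) _ m1(2)]) auto
    moreover have "\<bar>E2 (Suc n) b1\<bar> \<le> \<rho> * M n"
      using p2 by (intro g[OF bnd2 rge0(2) rr(4) _ m1(2)]) auto
    ultimately show ?thesis unfolding M_def by auto
  qed
  have geo: "M n \<le> \<rho> ^ n * M 0" for n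
  proof (induction n)
    case 0 then show ?case by simp
  next
    case (Suc n)
    have "M (Suc n) \<le> \<rho> * M n" by (rule step)
    also have "\<dots> \<le> \<rho> * (\<rho> ^ n * M 0)" using Suc rho0 by (intro mult_left_mono) auto
    finally show ?case by simp
  qed
  have lim: "(\<lambda>n. \<rho> ^ n * M 0) \<longlonglongrightarrow> 0"
    using rho0 rho1 by (intro tendsto_mult_left_zero LIMSEQ_power_zero) auto
  have S1: "0 \<le> (SUP s\<in>{a1..b1}. \<bar>U1 (Suc n) s - u s\<bar>) \<and> (SUP s\<in>{a1..b1}. \<bar>U1 (Suc n) s - u s\<bar>) \<le> M n" for n
  proof
    have bdd: "bdd_above ((\<lambda>s. \<bar>U1 (Suc n) s - u s\<bar>) ` {a1..b1})"
      using sup1 unfolding E1_def by (intro bdd_aboveI2) auto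
    have "\<bar>U1 (Suc n) a1 - u a1\<bar> \<le> (SUP s\<in>{a1..b1}. \<bar>U1 (Suc n) s - u s\<bar>)"
      using ab1 by (intro cSUP_upper bdd) auto
    then show "0 \<le> (SUP s\<in>{a1..b1}. \<bar>U1 (Suc n) s - u s\<bar>)" by linarith
    show "(SUP s\<in>{a1..b1}. \<bar>U1 (Suc n) s - u s\<bar>) \<le> M n"
      using ab1 sup1 unfolding E1_def by (intro cSUP_least) auto
  qed
  have S2: "0 \<le> (SUP s\<in>{a2..b2}. \<bar>U2 (Suc n) s - u s\<bar>) \<and> (SUP s\<in>{a2..b2}. \<bar>U2 (Suc n) s - u s\<bar>) \<le> M n" for n
  proof
    have bdd: "bdd_above ((\<lambda>s. \<bar>U2 (Suc n) s - u s\<bar>) ` {a2..b2})"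
      using sup2 unfolding E2_def by (intro bdd_aboveI2) auto
    have "\<bar>U2 (Suc n) a2 - u a2\<bar> \<le> (SUP s\<in>{a2..b2}. \<bar>U2 (Suc n) s - u s\<bar>)"
      using ab2 by (intro cSUP_upper bdd) auto
    then show "0 \<le> (SUP s\<in>{a2..b2}. \<bar>U2 (Suc n) s - u s\<bar>)" by linarith
    show "(SUP s\<in>{a2..b2}. \<bar>U2 (Suc n) s - u s\<bar>) \<le> M n"
      using ab2 sup2 unfolding E2_def by (intro cSUP_least) auto
  qed
  have "(\<lambda>n. SUP s\<in>{a1..b1}. \<bar>U1 (Suc n) s - u s\<bar>) \<longlonglongrightarrow> 0"
    by (rule tendsto_sandwich[OF _ _ tendsto_const lim]) (use S1 geo in \<open>auto intro!: always_eventually order_trans[OF _ geo]\<close>)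
  moreover have "(\<lambda>n. SUP s\<in>{a2..b2}. \<bar>U2 (Suc n) s - u s\<bar>) \<longlonglongrightarrow> 0"
    by (rule tendsto_sandwich[OF _ _ tendsto_const lim]) (use S2 geo in \<open>auto intro!: always_eventually order_trans[OF _ geo]\<close>)
  ultimately show ?thesis
    using filterlim_sequentially_Suc[of "\<lambda>n. SUP s\<in>{a1..b1}. \<bar>U1 n s - u s\<bar>"]
      filterlim_sequentially_Suc[of "\<lambda>n. SUP s\<in>{a2..b2}. \<bar>U2 n s - u s\<bar>"] by auto
qed

end
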